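(* Let $C$ be a sorting network on $n$ channels of depth $d$. Then there is a sorting network $N=L_1;\ldots;L_d$ on $n$ channels of the same depth $d$ whose last layer $L_d$ (i) only contains comparators between adjacent channels, i.e. of the form $(i,i+1)$, and (ii) does not contain two adjacent unused channels, i.e. there is no $i<n$ such that neither $i$ nor $i+1$ is used in $L_d$.
   Context: Channels are numbered $1,\ldots,n$. A comparator network of depth $d$ is a sequence $C=L_1;\ldots;L_d$ of layers; each layer is a set of comparators $(i,j)$ with $1\le i<j\le n$, each channel occurring in at most one comparator of a layer. An input $\bar x\in\{0,1\}^n$ propagates: $\bar x_0=\bar x$, and $\bar x_k$ is obtained from $\bar x_{k-1}$ by, for each $(i,j)\in L_k$, putting the minimum of the values at positions $i,j$ at position $i$ and the maximum at position $j$. The output is $C(\bar x)=\bar x_d$; $C$ is a sorting network if $C(\bar x)$ is sorted non-decreasingly for all $\bar x\in\{0,1\}^n$. A channel is used in a layer if it occurs in some comparator of that layer. *)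

theory Defs
  imports Main
begin

text \<open>Channels are 1..n; a comparator is a pair (i,j); a layer is a set of comparators;
  a comparator network is a list of layers (L_1 first). Boolean 0/1 values are modelled
  by bool (False = 0, True = 1), so min = conjunction, max = disjunction.\<close>

type_synonym comparator = "nat \<times> nat"
type_synonym layer = "comparator set"
type_synonym network = "layer list"

definition is_layer :: "nat \<Rightarrow> layer \<Rightarrow> bool" where
  "is_layer n L \<longleftrightarrow>
     (\<forall>(i,j)\<in>L. 1 \<le> i \<and> i < j \<and> j \<le> n) \<and>
     (\<forall>c\<in>L. \<forall>c'\<in>L. c \<noteq> c' \<longrightarrow>
        {fst c, snd c} \<inter> {fst c', snd c'} = {})"

definition is_network :: "nat \<Rightarrow> network \<Rightarrow> bool" where
  "is_network n C \<longleftrightarrow> (\<forall>L\<in>set C. is_layer n L)"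

definition used :: "layer \<Rightarrow> nat \<Rightarrow> bool" where
  "used L k \<longleftrightarrow> (\<exists>(i,j)\<in>L. k = i \<or> k = j)"

definition apply_layer :: "layer \<Rightarrow> (nat \<Rightarrow> bool) \<Rightarrow> (nat \<Rightarrow> bool)" where
  "apply_layer L x = (\<lambda>k.
     if \<exists>j. (k,j) \<in> L then x k \<and> x (THE j. (k,j) \<in> L)
     else if \<exists>i. (i,k) \<in> L then x (THE i. (i,k) \<in> L) \<or> x k
     else x k)"

definition run :: "network \<Rightarrow> (nat \<Rightarrow> bool) \<Rightarrow> (nat \<Rightarrow> bool)" where
  "run C x = fold apply_layer C x"

definition sorted_on :: "nat \<Rightarrow> (nat \<Rightarrow> bool) \<Rightarrow> bool" where
  "sorted_on n y \<longleftrightarrow> (\<forall>i j. 1 \<le> i \<and> i \<le> j \<and> j \<le> n \<longrightarrow> (y i \<longrightarrow> y j))"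

definition sorting_network :: "nat \<Rightarrow> network \<Rightarrow> bool" where
  "sorting_network n C \<longleftrightarrow> is_network n C \<and> (\<forall>x. sorted_on n (run C x))"

end

theory Submission
  imports Defs
begin


definition apply_layerV :: "layer \<Rightarrow> (nat \<Rightarrow> nat) \<Rightarrow> (nat \<Rightarrow> nat)" where
  "apply_layerV L v = (\<lambda>k.
     if \<exists>j. (k,j) \<in> L then min (v k) (v (THE j. (k,j) \<in> L))
     else if \<exists>i. (i,k) \<in> L then max (v (THE i. (i,k) \<in> L)) (v k)
     else v k)"

definition runV :: "network \<Rightarrow> (nat \<Rightarrow> nat) \<Rightarrow> (nat \<Rightarrow> nat)" where
  "runV C v = fold apply_layerV C v"

definition thr :: "nat \<Rightarrow> (nat \<Rightarrow> nat) \<Rightarrow> (nat \<Rightarrow> bool)" where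
  "thr t v = (\<lambda>k. t \<le> v k)"

lemma thr_layer: "thr t (apply_layerV L v) = apply_layer L (thr t v)"
  unfolding thr_def apply_layerV_def apply_layer_def by (auto simp: fun_eq_iff)

lemma thr_run: "thr t (runV C v) = run C (thr t v)"
  unfolding runV_def run_def
  by (induction C arbitrary: v) (simp_all add: thr_layer[unfolded runV_def])

lemma layer_bounds: "is_layer n L \<Longrightarrow> (a,b) \<in> L \<Longrightarrow> 1 \<le> a \<and> a < b \<and> b \<le> n"
  unfolding is_layer_def by blast

lemma layer_disj: "is_layer n L \<Longrightarrow> c \<in> L \<Longrightarrow> c' \<in> L \<Longrightarrow> c \<noteq> c' \<Longrightarrow> {fst c, snd c} \<inter> {fst c', snd c'} = {}"
  unfolding is_layer_def by blast

lemma layer_u1: "is_layer n L \<Longrightarrow> (a,b) \<in> L \<Longrightarrow> (a,b') \<in> L \<Longrightarrow> b' = b"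
  using layer_disj[of n L "(a,b)" "(a,b')"] by auto

lemma layer_u2: "is_layer n L \<Longrightarrow> (a,b) \<in> L \<Longrightarrow> (a',b) \<in> L \<Longrightarrow> a' = a"
  using layer_disj[of n L "(a,b)" "(a',b)"] by auto

lemma layer_nm: "is_layer n L \<Longrightarrow> (a,b) \<in> L \<Longrightarrow> (c,a) \<in> L \<Longrightarrow> False"
proof -
  assume L: "is_layer n L" and ab: "(a,b) \<in> L" and ca: "(c,a) \<in> L"
  have "a < b" using layer_bounds[OF L ab] by simp
  then have "(a,b) \<noteq> (c,a)" by auto
  then have "{a,b} \<inter> {c,a} = {}" using layer_disj[OF L ab ca] by simp
  then show False by simp
qed

lemma the_fst: "is_layer n L \<Longrightarrow> (k,j) \<in> L \<Longrightarrow> (THE j. (k,j) \<in> L) = j"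
  by (auto intro!: the_equality dest: layer_u1)

lemma the_snd: "is_layer n L \<Longrightarrow> (i,k) \<in> L \<Longrightarrow> (THE i. (i,k) \<in> L) = i"
  by (auto intro!: the_equality dest: layer_u2)

lemma alV_fst: "is_layer n L \<Longrightarrow> (k,j) \<in> L \<Longrightarrow> apply_layerV L v k = min (v k) (v j)"
  unfolding apply_layerV_def using the_fst by auto

lemma alV_snd: "is_layer n L \<Longrightarrow> (i,k) \<in> L \<Longrightarrow> apply_layerV L v k = max (v i) (v k)"
proof -
  assume L: "is_layer n L" and a: "(i,k) \<in> L"
  have "\<not> (\<exists>j. (k,j) \<in> L)" using layer_nm[OF L _ a] by blast
  then show ?thesis unfolding apply_layerV_def using the_snd[OF L a] a by auto
qed

lemma alV_unused: "\<not> used L k \<Longrightarrow> apply_layerV L v k = v k"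
  unfolding used_def apply_layerV_def by auto

lemma al_fst: "is_layer n L \<Longrightarrow> (k,j) \<in> L \<Longrightarrow> apply_layer L x k = (x k \<and> x j)"
  unfolding apply_layer_def using the_fst by auto

lemma al_snd: "is_layer n L \<Longrightarrow> (i,k) \<in> L \<Longrightarrow> apply_layer L x k = (x i \<or> x k)"
proof -
  assume L: "is_layer n L" and a: "(i,k) \<in> L"
  have "\<not> (\<exists>j. (k,j) \<in> L)" using layer_nm[OF L _ a] by blast
  then show ?thesis unfolding apply_layer_def using the_snd[OF L a] a by auto
qed

lemma al_unused: "\<not> used L k \<Longrightarrow> apply_layer L x k = x k"
  unfolding used_def apply_layer_def by auto

lemma used_cases: "used L k \<Longrightarrow> (\<And>j. (k,j) \<in> L \<Longrightarrow> Q) \<Longrightarrow> (\<And>i. (i,k) \<in> L \<Longrightarrow> Q) \<Longrightarrow> Q"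
  unfolding used_def by auto

lemma usedI1: "(k,j) \<in> L \<Longrightarrow> used L k" unfolding used_def by auto
lemma usedI2: "(i,k) \<in> L \<Longrightarrow> used L k" unfolding used_def by auto

definition pt :: "layer \<Rightarrow> nat \<Rightarrow> nat" where
 "pt L k = (if \<exists>j. (k,j)\<in>L then (THE j. (k,j)\<in>L) else if \<exists>i. (i,k)\<in>L then (THE i. (i,k)\<in>L) else k)"

lemma pt_fst: "is_layer n L \<Longrightarrow> (k,j)\<in>L \<Longrightarrow> pt L k = j"
  unfolding pt_def using the_fst by auto
lemma pt_snd: "is_layer n L \<Longrightarrow> (i,k)\<in>L \<Longrightarrow> pt L k = i"
proof -
  assume L: "is_layer n L" and a: "(i,k) \<in> L"
  have "\<not> (\<exists>j. (k,j) \<in> L)" using layer_nm[OF L _ a] by blast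
  then show ?thesis unfolding pt_def using the_snd[OF L a] a by auto
qed
lemma pt_unused: "\<not> used L k \<Longrightarrow> pt L k = k"
  unfolding used_def pt_def by auto

lemma pt_facts:
  assumes L: "is_layer n L"
  shows "pt L (pt L k) = k"
    and "k \<in> {1..n} \<Longrightarrow> pt L k \<in> {1..n}"
    and "apply_layerV L v k = v k \<or> apply_layerV L v k = v (pt L k)"
    and "pt L k \<noteq> k \<Longrightarrow> {apply_layerV L v k, apply_layerV L v (pt L k)} = {v k, v (pt L k)}"
proof -
  have "(pt L (pt L k) = k) \<and> (k \<in> {1..n} \<longrightarrow> pt L k \<in> {1..n}) \<and>
    (apply_layerV L v k = v k \<or> apply_layerV L v k = v (pt L k)) \<and>
    (pt L k \<noteq> k \<longrightarrow> {apply_layerV L v k, apply_layerV L v (pt L k)} = {v k, v (pt L k)})"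
  proof (cases "used L k")
    case True
    then show ?thesis
    proof (rule used_cases)
      fix j assume a: "(k,j) \<in> L"
      have "pt L k = j" "pt L j = k" using pt_fst[OF L a] pt_snd[OF L a] .
      moreover have "apply_layerV L v k = min (v k) (v j)" "apply_layerV L v j = max (v k) (v j)"
        using alV_fst[OF L a] alV_snd[OF L a] .
      moreover have "1 \<le> j \<and> j \<le> n" using layer_bounds[OF L a] by auto
      ultimately show ?thesis by (auto simp: min_def max_def)
    next
      fix i assume a: "(i,k) \<in> L"
      have "pt L k = i" "pt L i = k" using pt_snd[OF L a] pt_fst[OF L a] .
      moreover have "apply_layerV L v k = max (v i) (v k)" "apply_layerV L v i = min (v i) (v k)"
        using alV_snd[OF L a] alV_fst[OF L a] .
      moreover have "1 \<le> i \<and> i \<le> n" using layer_bounds[OF L a] by auto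
      ultimately show ?thesis by (auto simp: min_def max_def)
    qed
  next
    case False
    then show ?thesis using pt_unused alV_unused by auto
  qed
  then show "pt L (pt L k) = k"
    and "k \<in> {1..n} \<Longrightarrow> pt L k \<in> {1..n}"
    and "apply_layerV L v k = v k \<or> apply_layerV L v k = v (pt L k)"
    and "pt L k \<noteq> k \<Longrightarrow> {apply_layerV L v k, apply_layerV L v (pt L k)} = {v k, v (pt L k)}"
    by blast+
qed

lemma layer_inj_img:
  assumes L: "is_layer n L" and inj: "inj_on v {1..n}"
  shows "inj_on (apply_layerV L v) {1..n}" and "apply_layerV L v ` {1..n} = v ` {1..n}"
proof -
  show "inj_on (apply_layerV L v) {1..n}"
  proof (rule inj_onI, rule ccontr)
    fix p q assume p: "p \<in> {1..n}" and q: "q \<in> {1..n}" and e: "apply_layerV L v p = apply_layerV L v q"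
      and ne: "p \<noteq> q"
    have pp: "pt L p \<in> {1..n}" "pt L q \<in> {1..n}" using pt_facts(2)[OF L] p q by auto
    have inv: "pt L (pt L p) = p" "pt L (pt L q) = q" using pt_facts(1)[OF L] by auto
    obtain p' where p': "p' \<in> {p, pt L p}" "apply_layerV L v p = v p'"
    proof (cases "apply_layerV L v p = v p")
      case True then show ?thesis using that[of p] by simp
    next
      case False then show ?thesis using that[of "pt L p"] pt_facts(3)[OF L, of v p] by simp
    qed
    obtain q' where q': "q' \<in> {q, pt L q}" "apply_layerV L v q = v q'"
    proof (cases "apply_layerV L v q = v q")
      case True then show ?thesis using that[of q] by simp
    next
      case False then show ?thesis using that[of "pt L q"] pt_facts(3)[OF L, of v q] by simp
    qed
    have "p' \<in> {1..n}" "q' \<in> {1..n}" using p'(1) q'(1) p q pp by auto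
    then have pq: "p' = q'" using inj p'(2) q'(2) e by (metis inj_onD)
    have qp: "q = pt L p"
    proof (cases "p' = p")
      case True
      then have "q' = p" using pq by simp
      then have "p = pt L q" using q'(1) ne by auto
      then show ?thesis using inv(2) by simp
    next
      case False
      then have "p' = pt L p" using p'(1) by auto
      show ?thesis
      proof (cases "q' = q")
        case True then show ?thesis using pq \<open>p' = pt L p\<close> by simp
      next
        case False
        then have "q' = pt L q" using q'(1) by auto
        then have "pt L p = pt L q" using pq \<open>p' = pt L p\<close> by simp
        then have "pt L (pt L p) = pt L (pt L q)" by simp
        then have "p = q" using inv by simp
        then show ?thesis using ne by simp
      qed
    qed
    have np: "pt L p \<noteq> p" using qp ne by metis
    have s: "{apply_layerV L v p, apply_layerV L v q} = {v p, v q}"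
      using pt_facts(4)[OF L np, of v] unfolding qp[symmetric] .
    have vne: "v p \<noteq> v q" using inj p q ne by (metis inj_onD)
    have "v p \<in> {apply_layerV L v p, apply_layerV L v q}" using s by (metis insertI1)
    then have 1: "v p = apply_layerV L v p" using e by simp
    have "v q \<in> {apply_layerV L v p, apply_layerV L v q}" using s by (metis insertI1 insertI2)
    then have 2: "v q = apply_layerV L v p" using e by simp
    show False using 1 2 vne by simp
  qed
  show "apply_layerV L v ` {1..n} = v ` {1..n}"
  proof
    show "apply_layerV L v ` {1..n} \<subseteq> v ` {1..n}"
    proof
      fix y assume "y \<in> apply_layerV L v ` {1..n}"
      then obtain k where k: "k \<in> {1..n}" "y = apply_layerV L v k" by blast
      have "pt L k \<in> {1..n}" using pt_facts(2)[OF L k(1)] .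
      then show "y \<in> v ` {1..n}" using pt_facts(3)[OF L, of v k] k by blast
    qed
    show "v ` {1..n} \<subseteq> apply_layerV L v ` {1..n}"
    proof
      fix y assume "y \<in> v ` {1..n}"
      then obtain k where k: "k \<in> {1..n}" "y = v k" by auto
      show "y \<in> apply_layerV L v ` {1..n}"
      proof (cases "pt L k = k")
        case True
        then have "apply_layerV L v k = v k" using pt_facts(3)[OF L, of v k] by auto
        then show ?thesis using k by force
      next
        case False
        then have "v k \<in> {apply_layerV L v k, apply_layerV L v (pt L k)}"
          using pt_facts(4)[OF L, of k v] by auto
        then show ?thesis using k pt_facts(2)[OF L k(1)] by auto
      qed
    qed
  qed
qed

lemma run_inj_img:
  assumes "is_network n C" "inj_on v {1..n}"
  shows "inj_on (runV C v) {1..n} \<and> runV C v ` {1..n} = v ` {1..n}"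
  using assms unfolding runV_def
proof (induction C arbitrary: v)
  case Nil thus ?case by simp
next
  case (Cons L C)
  have L: "is_layer n L" and N: "is_network n C" using Cons.prems(1) by (auto simp: is_network_def)
  have "inj_on (apply_layerV L v) {1..n}" "apply_layerV L v ` {1..n} = v ` {1..n}"
    using layer_inj_img[OF L Cons.prems(2)] by auto
  with Cons.IH[OF N] show ?case by simp
qed

lemma layer_local:
  assumes L: "is_layer n L" and e: "\<forall>k\<in>{1..n}. x k = x' k" and k: "k \<in> {1..n}"
  shows "apply_layer L x k = apply_layer L x' k"
proof (cases "used L k")
  case True
  then show ?thesis
  proof (rule used_cases)
    fix j assume a: "(k,j) \<in> L"
    then show ?thesis using al_fst[OF L a] layer_bounds[OF L a] e k by auto
  next
    fix i assume a: "(i,k) \<in> L"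
    then show ?thesis using al_snd[OF L a] layer_bounds[OF L a] e k by auto
  qed
next
  case False
  then show ?thesis using al_unused e k by auto
qed

lemma run_local:
  assumes "is_network n C" "\<forall>k\<in>{1..n}. x k = x' k"
  shows "\<forall>k\<in>{1..n}. run C x k = run C x' k"
  using assms unfolding run_def
proof (induction C arbitrary: x x')
  case Nil thus ?case by simp
next
  case (Cons L C)
  have L: "is_layer n L" and N: "is_network n C" using Cons.prems(1) by (auto simp: is_network_def)
  have "\<forall>k\<in>{1..n}. apply_layer L x k = apply_layer L x' k"
    using layer_local[OF L Cons.prems(2)] by blast
  with Cons.IH[OF N] show ?case by simp
qed

lemma layer_mono_id:
  assumes L: "is_layer n L" and m: "\<forall>r\<in>{1..n}. \<forall>s\<in>{1..n}. r \<le> s \<longrightarrow> v r \<le> v s"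
  shows "apply_layerV L v = v"
proof
  fix k show "apply_layerV L v k = v k"
  proof (cases "used L k")
    case True
    then show ?thesis
    proof (rule used_cases)
      fix j assume a: "(k,j) \<in> L"
      then show ?thesis using alV_fst[OF L a] layer_bounds[OF L a] m by (auto simp: min_def)
    next
      fix i assume a: "(i,k) \<in> L"
      then show ?thesis using alV_snd[OF L a] layer_bounds[OF L a] m by (auto simp: max_def)
    qed
  next
    case False
    then show ?thesis using alV_unused by auto
  qed
qed

lemma run_mono_id:
  assumes "is_network n C" "\<forall>r\<in>{1..n}. \<forall>s\<in>{1..n}. r \<le> s \<longrightarrow> v r \<le> v s"
  shows "runV C v = v"
  using assms unfolding runV_def
  by (induction C) (auto simp: is_network_def layer_mono_id)



lemma sorted_run:
  assumes sn: "\<forall>x. sorted_on n (apply_layer L (run P x))"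
    and pq: "1 \<le> p" "p \<le> q" "q \<le> n"
  shows "apply_layerV L (runV P v) p \<le> apply_layerV L (runV P v) q"
proof (rule ccontr)
  assume c: "\<not> ?thesis"
  define t where "t = apply_layerV L (runV P v) p"
  have e: "thr t (apply_layerV L (runV P v)) = apply_layer L (run P (thr t v))"
    by (simp add: thr_layer thr_run)
  have "sorted_on n (thr t (apply_layerV L (runV P v)))" using sn e by simp
  then have "thr t (apply_layerV L (runV P v)) p \<longrightarrow> thr t (apply_layerV L (runV P v)) q"
    using pq unfolding sorted_on_def by blast
  then show False using c unfolding thr_def t_def by simp
qed

lemma thr_cmp:
  fixes w w' a a' :: nat
  assumes h: "\<forall>t. \<not> (a < t \<and> t \<le> a') \<longrightarrow> (t \<le> w \<longleftrightarrow> t \<le> w')"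
    and wV: "w \<in> V" "w' \<in> V" and nv: "\<forall>t\<in>V. \<not> (a < t \<and> t < a')"
  shows "w = w' \<or> (w = a \<and> w' = a') \<or> (w = a' \<and> w' = a)"
proof -
  have *: "w = a \<and> w' = a'" if "w < w'" "w \<in> V" "w' \<in> V"
     "\<forall>t. \<not> (a < t \<and> t \<le> a') \<longrightarrow> (t \<le> w \<longleftrightarrow> t \<le> w')" for w w'
  proof -
    have 1: "a < w' \<and> w' \<le> a'" using that(4)[rule_format, of w'] that(1) by auto
    have 2: "a < Suc w \<and> Suc w \<le> a'" using that(4)[rule_format, of "Suc w"] that(1) by auto
    have 3: "\<not> (a < w \<and> w < a')" "\<not> (a < w' \<and> w' < a')" using nv that(2,3) by auto
    show ?thesis using 1 2 3 by linarith
  qed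
  show ?thesis
  proof (cases w w' rule: linorder_cases)
    case less then show ?thesis using *[of w w'] h wV by blast
  next
    case equal then show ?thesis by simp
  next
    case greater
    have "\<forall>t. \<not> (a < t \<and> t \<le> a') \<longrightarrow> (t \<le> w' \<longleftrightarrow> t \<le> w)" using h by blast
    then show ?thesis using *[of w' w] greater wV by blast
  qed
qed

definition mu :: "nat \<Rightarrow> (nat \<Rightarrow> nat) \<Rightarrow> nat" where "mu n v = (\<Sum>k\<in>{1..n}. k * v k)"

lemma mu_split:
  assumes r: "r \<in> {1..n}" and s: "s \<in> {1..n}" and rs: "r < s"
  shows "mu n g = r * g r + s * g s + (\<Sum>k\<in>{1..n}-{r}-{s}. k * g k)"
proof -
  have 1: "(\<Sum>k\<in>{1..n}. k * g k) = r * g r + (\<Sum>k\<in>{1..n}-{r}. k * g k)"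
    by (rule sum.remove) (use r in auto)
  have 2: "(\<Sum>k\<in>{1..n}-{r}. k * g k) = s * g s + (\<Sum>k\<in>{1..n}-{r}-{s}. k * g k)"
    by (rule sum.remove) (use s rs in auto)
  show ?thesis unfolding mu_def 1 2 by simp
qed

lemma swap_mu:
  assumes r: "r \<in> {1..n}" and s: "s \<in> {1..n}" and rs: "r < s" and vv: "v s < v r"
  shows "mu n v < mu n (\<lambda>k. if k = r then v s else if k = s then v r else v k)"
proof -
  define v' where "v' = (\<lambda>k. if k = r then v s else if k = s then v r else v k)"
  have B: "(\<Sum>k\<in>{1..n}-{r}-{s}. k * v' k) = (\<Sum>k\<in>{1..n}-{r}-{s}. k * v k)"
    by (rule sum.cong) (auto simp: v'_def)
  define p where "p = s - r"
  define q where "q = v r - v s"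
  have p: "s = r + p" "p > 0" using rs unfolding p_def by auto
  have q: "v r = v s + q" "q > 0" using vv unfolding q_def by auto
  have e: "r * (v s + q) + (r + p) * v s + p * q = r * v s + (r + p) * (v s + q)"
    by (simp add: algebra_simps)
  have "0 < p * q" using p(2) q(2) by simp
  then have "r * (v s + q) + (r + p) * v s < r * v s + (r + p) * (v s + q)" using e by linarith
  then have "r * v r + s * v s < r * v s + s * v r" using p(1) q(1) by simp
  moreover have "v' r = v s" "v' s = v r" using rs by (auto simp: v'_def)
  ultimately have "mu n v < mu n v'" unfolding mu_split[OF r s rs, of v] mu_split[OF r s rs, of v'] B
    by simp
  then show ?thesis unfolding v'_def .
qed

lemma swap_props:
  fixes v :: "nat \<Rightarrow> nat" and n r s :: nat
  assumes inj: "inj_on v {1..n}" and r: "r \<in> {1..n}" and s: "s \<in> {1..n}"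
  shows "inj_on (\<lambda>k. if k = r then v s else if k = s then v r else v k) {1..n} \<and>
         (\<lambda>k. if k = r then v s else if k = s then v r else v k) ` {1..n} = v ` {1..n}"
proof -
  define tau :: "nat \<Rightarrow> nat" where "tau = (\<lambda>k::nat. if k = r then s else if k = s then r else k)"
  have eq: "(\<lambda>k. if k = r then v s else if k = s then v r else v k) = v \<circ> tau"
    by (auto simp: tau_def fun_eq_iff)
  have tt: "tau (tau k) = k" for k by (auto simp: tau_def)
  have ti: "tau ` {1..n} = {1..n}"
  proof
    show "tau ` {1..n} \<subseteq> {1..n}" using r s by (auto simp: tau_def)
    show "{1..n} \<subseteq> tau ` {1..n}"
    proof
      fix k assume k: "k \<in> {1..n}"
      have "tau k \<in> {1..n}" using k r s by (auto simp: tau_def)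
      then show "k \<in> tau ` {1..n}" using tt[of k] by (metis image_eqI)
    qed
  qed
  have tinj: "inj_on tau {1..n}" by (metis inj_onI tt)
  have "inj_on (v \<circ> tau) {1..n}" using comp_inj_on[OF tinj] inj ti by simp
  moreover have "(v \<circ> tau) ` {1..n} = v ` {1..n}" using ti by (metis image_comp)
  ultimately show ?thesis unfolding eq by simp
qed

lemma final_arith: fixes ui u'i uj u'j vs vr m :: nat
  assumes "ui = u'i \<or> ui = vs \<and> u'i = vr \<or> ui = vr \<and> u'i = vs"
"uj = u'j \<or> uj = vs \<and> u'j = vr \<or> uj = vr \<and> u'j = vs"
"u'i \<noteq> u'j" "u'i \<le> u'j" "uj < ui" "uj < m" "m < ui"
"\<not> (vs < m \<and> m < vr)" "\<not> (vs < ui \<and> ui < vr)" "\<not> (vs < uj \<and> uj < vr)" "vs < vr"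
shows False
proof -
  have lt: "u'i < u'j" using assms(3,4) by simp
  have a: "m \<le> vs \<or> vr \<le> m" "ui \<le> vs \<or> vr \<le> ui" "uj \<le> vs \<or> vr \<le> uj" using assms(8-10) by auto
  show False using assms(1,2) a
    by (elim disjE conjE; use lt assms(5-7,11) in linarith)
qed

lemma key:
  assumes P: "is_network n P" and L: "is_layer n L"
    and srt: "\<And>v p q. 1 \<le> p \<Longrightarrow> p \<le> q \<Longrightarrow> q \<le> n \<Longrightarrow> apply_layerV L (runV P v) p \<le> apply_layerV L (runV P v) q"
    and ij: "(i,j) \<in> L" "i + 1 < j"
  shows "inj_on v {1..n} \<Longrightarrow> \<not> runV P v j < runV P v i"
proof (induction v rule: measure_induct_rule[where f = "\<lambda>v. (\<Sum>k\<in>{1..n}. k * Max (v ` {1..n})) - mu n v"])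
  case (less v)
  have ijb: "1 \<le> i" "i < j" "j \<le> n" using layer_bounds[OF L ij(1)] by auto
  show ?case
  proof
    assume act: "runV P v j < runV P v i"
    show False
    proof (cases "\<forall>r\<in>{1..n}. \<forall>s\<in>{1..n}. r \<le> s \<longrightarrow> v r \<le> v s")
      case True
      then have "runV P v = v" using run_mono_id[OF P] by blast
      moreover have "v i \<le> v j" using True ijb by auto
      ultimately show False using act by simp
    next
      case False
      define Inv where "Inv g \<longleftrightarrow> (\<exists>r s. r \<in> {1..n} \<and> s \<in> {1..n} \<and> r < s \<and> v s < v r \<and> v r - v s = g)" for g
      have "\<exists>g. Inv g"
      proof -
        obtain r s where rs: "r \<in> {1..n}" "s \<in> {1..n}" "r \<le> s" "\<not> v r \<le> v s" using False by blast
        then have "r \<noteq> s" by auto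
        then have "Inv (v r - v s)" unfolding Inv_def using rs by (intro exI[of _ r] exI[of _ s]) auto
        then show ?thesis by blast
      qed
      then obtain g where g: "Inv g" "\<forall>g'<g. \<not> Inv g'" using exists_least_iff[of Inv] by blast
      then obtain r s where rs: "r \<in> {1..n}" "s \<in> {1..n}" "r < s" "v s < v r" "v r - v s = g"
        unfolding Inv_def by blast
      define V where "V = v ` {1..n}"
      have nv: "\<forall>t\<in>V. \<not> (v s < t \<and> t < v r)"
      proof (rule ballI, rule notI)
        fix t assume tV: "t \<in> V" and tt: "v s < t \<and> t < v r"
        obtain k where k: "k \<in> {1..n}" "t = v k" using tV V_def by auto
        show False
        proof (cases "k < r")
          case True
          then have "Inv (v k - v s)" unfolding Inv_def using k rs tt
            by (intro exI[of _ k] exI[of _ s]) auto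
          moreover have "v k - v s < g" using rs tt k by auto
          ultimately show False using g(2) by blast
        next
          case False
          have "k \<noteq> r" using tt k by auto
          then have "r < k" using False by auto
          then have "Inv (v r - v k)" unfolding Inv_def using k rs tt
            by (intro exI[of _ r] exI[of _ k]) auto
          moreover have "v r - v k < g" using rs tt k by auto
          ultimately show False using g(2) by blast
        qed
      qed
      define v' where "v' = (\<lambda>k. if k = r then v s else if k = s then v r else v k)"
      have sw: "inj_on v' {1..n}" "v' ` {1..n} = V"
        using swap_props[OF less.prems rs(1,2)] unfolding v'_def V_def by auto
      have mu_lt: "mu n v < mu n v'" using swap_mu[OF rs(1-4)] unfolding v'_def .
      have finV: "finite V" unfolding V_def by simp
      have bound: "mu n v' \<le> (\<Sum>k\<in>{1..n}. k * Max V)"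
        unfolding mu_def
      proof (rule sum_mono)
        fix k assume "k \<in> {1..n}"
        then have "v' k \<in> V" using sw(2) by auto
        then have "v' k \<le> Max V" using finV by simp
        then show "k * v' k \<le> k * Max V" by simp
      qed
      have "(\<Sum>k\<in>{1..n}. k * Max (v' ` {1..n})) - mu n v' < (\<Sum>k\<in>{1..n}. k * Max (v ` {1..n})) - mu n v"
        using mu_lt bound sw(2) unfolding V_def by simp
      then have IH: "\<not> runV P v' j < runV P v' i" using less.IH sw(1) by blast
      define u where "u = runV P v"
      define u' where "u' = runV P v'"
      have uprops: "inj_on u {1..n}" "u ` {1..n} = V"
        using run_inj_img[OF P less.prems] unfolding u_def V_def by auto
      have u'props: "inj_on u' {1..n}" "u' ` {1..n} = V"
        using run_inj_img[OF P sw(1)] sw(2) unfolding u'_def by auto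
      have thrv: "thr t v' = thr t v" if "\<not> (v s < t \<and> t \<le> v r)" for t
        using that rs(4) unfolding v'_def thr_def by (auto simp: fun_eq_iff)
      have thru: "(t \<le> u k \<longleftrightarrow> t \<le> u' k)" if "\<not> (v s < t \<and> t \<le> v r)" for t k
      proof -
        have "thr t u' = thr t u" unfolding u_def u'_def thr_run thrv[OF that] ..
        from fun_cong[OF this, of k] show ?thesis unfolding thr_def by simp
      qed
      have iV: "u i \<in> V" "u' i \<in> V" "u j \<in> V" "u' j \<in> V"
        using uprops(2) u'props(2) ijb by auto
      have ci: "u i = u' i \<or> (u i = v s \<and> u' i = v r) \<or> (u i = v r \<and> u' i = v s)"
        by (rule thr_cmp[where V = V]) (use thru iV nv in auto)
      have cj: "u j = u' j \<or> (u j = v s \<and> u' j = v r) \<or> (u j = v r \<and> u' j = v s)"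
        by (rule thr_cmp[where V = V]) (use thru iV nv in auto)
      have memb: "i \<in> {1..n}" "j \<in> {1..n}" "i+1 \<in> {1..n}" using ijb by auto
      have neq': "u' i \<noteq> u' j" using inj_onD[OF u'props(1) _ memb(1) memb(2)] ijb by auto
      define w where "w = apply_layerV L u"
      have act': "u j < u i" using act unfolding u_def .
      have wi: "w i = u j" using alV_fst[OF L ij(1), of u] act' unfolding w_def by simp
      have wj: "w j = u i" using alV_snd[OF L ij(1), of u] act' unfolding w_def by simp
      have winj: "inj_on w {1..n}" and wV: "w ` {1..n} = V"
        using layer_inj_img[OF L uprops(1)] uprops(2) unfolding w_def by auto
      have le1: "w i \<le> w (i+1)" using srt[of i "i+1" v] ijb unfolding w_def u_def by simp
      have le2: "w (i+1) \<le> w j" using srt[of "i+1" j v] ijb unfolding w_def u_def by simp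
      have ne1: "w i \<noteq> w (i+1)" using inj_onD[OF winj _ memb(1) memb(3)] by auto
      have ne2: "w (i+1) \<noteq> w j" using inj_onD[OF winj _ memb(3) memb(2)] ij(2) by auto
      have mV: "w (i+1) \<in> V" using wV ijb by auto
      have nm: "\<not> (v s < w (i+1) \<and> w (i+1) < v r)" using nv mV by blast
      have nui: "\<not> (v s < u i \<and> u i < v r)" "\<not> (v s < u j \<and> u j < v r)" using nv iV by auto
      have IH': "u' i \<le> u' j" using IH unfolding u'_def by simp
      have m: "u j < w (i+1)" "w (i+1) < u i" using le1 le2 ne1 ne2 wi wj by auto
      show False using final_arith[OF ci cj neq' IH' act' m nm nui rs(4)] .
    qed
  qed
qed



lemma red:
  assumes P: "is_network n P" and L: "is_layer n L"
    and sn: "\<forall>x. sorted_on n (apply_layer L (run P x))"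
    and ij: "(i,j) \<in> L" "i + 1 < j"
  shows "run P x i \<longrightarrow> run P x j"
proof
  assume xi: "run P x i"
  show "run P x j"
  proof (rule ccontr)
    assume xj: "\<not> run P x j"
    define v where "v = (\<lambda>r. if x r then n + 1 + r else r)"
    have inj: "inj_on v {1..n}" unfolding inj_on_def v_def by auto
    have agree: "\<forall>k\<in>{1..n}. x k = thr (n+1) v k" unfolding thr_def v_def by auto
    have ijb: "i \<in> {1..n}" "j \<in> {1..n}" using layer_bounds[OF L ij(1)] by auto
    have loc: "\<forall>k\<in>{1..n}. run P x k = run P (thr (n+1) v) k" using run_local[OF P agree] .
    have tr: "run P (thr (n+1) v) = thr (n+1) (runV P v)" by (simp add: thr_run)
    have e1': "run P x i = thr (n+1) (runV P v) i" using loc[rule_format, OF ijb(1)] tr by simp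
    have e2': "run P x j = thr (n+1) (runV P v) j" using loc[rule_format, OF ijb(2)] tr by simp
    have e1: "run P x i = (n + 1 \<le> runV P v i)" using e1' unfolding thr_def .
    have e2: "run P x j = (n + 1 \<le> runV P v j)" using e2' unfolding thr_def .
    have "n + 1 \<le> runV P v i" using e1 xi by simp
    moreover have "\<not> n + 1 \<le> runV P v j" using e2 xj by simp
    ultimately have "runV P v j < runV P v i" by simp
    moreover have "\<not> runV P v j < runV P v i"
      by (rule key[OF P L _ ij inj]) (rule sorted_run[OF sn])
    ultimately show False by simp
  qed
qed

lemma final_layer:
  assumes L: "is_layer n L" and L2: "is_layer n L2"
    and sw: "sorted_on n (apply_layer L y)"
    and red: "\<And>i j. (i,j) \<in> L \<Longrightarrow> j \<noteq> i + 1 \<Longrightarrow> y i \<longrightarrow> y j"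
    and sub: "\<And>i. (i, i+1) \<in> L \<Longrightarrow> (i, i+1) \<in> L2"
    and adj: "\<And>i j. (i,j) \<in> L2 \<Longrightarrow> j = i + 1"
  shows "sorted_on n (apply_layer L2 y)"
proof -
  define w where "w = apply_layer L y"
  have F: "y k = w k" if "\<And>j. (k,j) \<in> L \<Longrightarrow> j \<noteq> k+1" "\<And>i. (i,k) \<in> L \<Longrightarrow> k \<noteq> i+1" for k
  proof (cases "used L k")
    case True
    then show ?thesis
    proof (rule used_cases)
      fix j assume a: "(k,j) \<in> L"
      have "y k \<longrightarrow> y j" using red[OF a that(1)[OF a]] .
      then show ?thesis using al_fst[OF L a] unfolding w_def by auto
    next
      fix i assume a: "(i,k) \<in> L"
      have "y i \<longrightarrow> y k" using red[OF a that(2)[OF a]] .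
      then show ?thesis using al_snd[OF L a] unfolding w_def by auto
    qed
  next
    case False then show ?thesis using al_unused[OF False] unfolding w_def by simp
  qed
  have ws: "w a \<longrightarrow> w b" if "1 \<le> a" "a \<le> b" "b \<le> n" for a b
    using sw that unfolding sorted_on_def w_def by blast
  have E: "apply_layer L2 y k = w k" if k: "k \<in> {1..n}" for k
  proof (cases "used L2 k")
    case True
    then show ?thesis
    proof (rule used_cases)
      fix j assume a: "(k,j) \<in> L2"
      have j: "j = k + 1" using adj[OF a] .
      have bj: "1 \<le> k" "k < j" "j \<le> n" using layer_bounds[OF L2 a] by auto
      show ?thesis
      proof (cases "(k,j) \<in> L")
        case True
        then show ?thesis using al_fst[OF L2 a] al_fst[OF L True] unfolding w_def by simp
      next
        case False
        have yk: "y k = w k"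
        proof (rule F)
          fix j' assume b: "(k,j') \<in> L" show "j' \<noteq> k+1"
          proof
            assume "j' = k+1"
            then have "(k,j') \<in> L2" using sub b by simp
            then have "j' = j" using layer_u1[OF L2 a] by simp
            then show False using b False by simp
          qed
        next
          fix i' assume b: "(i',k) \<in> L" show "k \<noteq> i'+1"
          proof
            assume "k = i'+1"
            then have "(i',k) \<in> L2" using sub b by simp
            then show False by (rule layer_nm[OF L2 a])
          qed
        qed
        have yj: "y j = w j"
        proof (rule F)
          fix j' assume b: "(j,j') \<in> L" show "j' \<noteq> j+1"
          proof
            assume "j' = j+1"
            then have "(j,j') \<in> L2" using sub b by simp
            then show False by (rule layer_nm[OF L2 _ a])
          qed
        next
          fix i' assume b: "(i',j) \<in> L" show "j \<noteq> i'+1"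
          proof
            assume "j = i'+1"
            then have "(i',j) \<in> L2" using sub b by simp
            then have "i' = k" using layer_u2[OF L2 a] by simp
            then show False using b False by simp
          qed
        qed
        have "w k \<longrightarrow> w j" using ws[of k j] bj by simp
        then show ?thesis using al_fst[OF L2 a] yk yj by auto
      qed
    next
      fix i assume a: "(i,k) \<in> L2"
      have i: "k = i + 1" using adj[OF a] .
      have bi: "1 \<le> i" "i < k" "k \<le> n" using layer_bounds[OF L2 a] by auto
      show ?thesis
      proof (cases "(i,k) \<in> L")
        case True
        then show ?thesis using al_snd[OF L2 a] al_snd[OF L True] unfolding w_def by simp
      next
        case False
        have yk: "y k = w k"
        proof (rule F)
          fix j' assume b: "(k,j') \<in> L" show "j' \<noteq> k+1"
          proof
            assume "j' = k+1"
            then have "(k,j') \<in> L2" using sub b by simp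
            then show False by (rule layer_nm[OF L2 _ a])
          qed
        next
          fix i' assume b: "(i',k) \<in> L" show "k \<noteq> i'+1"
          proof
            assume "k = i'+1"
            then have "(i',k) \<in> L2" using sub b by simp
            then have "i' = i" using layer_u2[OF L2 a] by simp
            then show False using b False by simp
          qed
        qed
        have yi: "y i = w i"
        proof (rule F)
          fix j' assume b: "(i,j') \<in> L" show "j' \<noteq> i+1"
          proof
            assume "j' = i+1"
            then have "(i,j') \<in> L2" using sub b by simp
            then have "j' = k" using layer_u1[OF L2 a] by simp
            then show False using b False by simp
          qed
        next
          fix i' assume b: "(i',i) \<in> L" show "i \<noteq> i'+1"
          proof
            assume "i = i'+1"
            then have "(i',i) \<in> L2" using sub b by simp
            then show False by (rule layer_nm[OF L2 a])
          qed
        qed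
        have "w i \<longrightarrow> w k" using ws[of i k] bi by simp
        then show ?thesis using al_snd[OF L2 a] yk yi by auto
      qed
    qed
  next
    case False
    have "y k = w k"
    proof (rule F)
      fix j assume b: "(k,j) \<in> L" show "j \<noteq> k+1"
      proof
        assume "j = k+1"
        then have "(k,j) \<in> L2" using sub b by simp
        then show False using False usedI1 by metis
      qed
    next
      fix i assume b: "(i,k) \<in> L" show "k \<noteq> i+1"
      proof
        assume "k = i+1"
        then have "(i,k) \<in> L2" using sub b by simp
        then show False using False usedI2 by metis
      qed
    qed
    then show ?thesis using al_unused[OF False] by simp
  qed
  show ?thesis unfolding sorted_on_def
  proof (intro allI impI)
    fix a b assume ab: "1 \<le> a \<and> a \<le> b \<and> b \<le> n" and A: "apply_layer L2 y a"
    then have "a \<in> {1..n}" "b \<in> {1..n}" by auto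
    then have "apply_layer L2 y a = w a" "apply_layer L2 y b = w b" using E by auto
    moreover have "w a \<longrightarrow> w b" using ws[of a b] ab by simp
    ultimately show "apply_layer L2 y b" using A by simp
  qed
qed

lemma layer_insert:
  assumes L: "is_layer n L" and ab: "1 \<le> a" "a < b" "b \<le> n"
    and ua: "\<not> used L a" and ub: "\<not> used L b"
  shows "is_layer n (insert (a,b) L)"
proof -
  have na: "\<forall>c\<in>L. a \<noteq> fst c \<and> a \<noteq> snd c" using ua unfolding used_def by auto
  have nb: "\<forall>c\<in>L. b \<noteq> fst c \<and> b \<noteq> snd c" using ub unfolding used_def by auto
  have b1: "\<forall>(i,j)\<in>insert (a,b) L. 1 \<le> i \<and> i < j \<and> j \<le> n"
    using L ab unfolding is_layer_def by auto
  have b2: "{fst c, snd c} \<inter> {fst c', snd c'} = {}" if c: "c \<in> insert (a,b) L" "c' \<in> insert (a,b) L" "c \<noteq> c'" for c c'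
  proof (cases "c = (a,b)")
    case True
    then have "c' \<in> L" using c by auto
    then show ?thesis using True na nb by auto
  next
    case False
    then have cL: "c \<in> L" using c by auto
    show ?thesis
    proof (cases "c' = (a,b)")
      case True
      then show ?thesis using cL na nb by auto
    next
      case False
      then have "c' \<in> L" using c by auto
      then show ?thesis using layer_disj[OF L cL _ c(3)] by simp
    qed
  qed
  show ?thesis unfolding is_layer_def using b1 b2 by blast
qed

lemma extend:
  assumes "is_layer n L1" "\<forall>(i,j)\<in>L1. j = i+1"
  shows "\<exists>L2. L1 \<subseteq> L2 \<and> is_layer n L2 \<and> (\<forall>(i,j)\<in>L2. j = i+1) \<and>
     \<not>(\<exists>i. 1 \<le> i \<and> i < n \<and> \<not> used L2 i \<and> \<not> used L2 (i+1))"
  using assms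
proof (induction L1 rule: measure_induct_rule[where f = "\<lambda>L. card {k\<in>{1..n}. \<not> used L k}"])
  case (less L1)
  show ?case
  proof (cases "\<exists>i. 1 \<le> i \<and> i < n \<and> \<not> used L1 i \<and> \<not> used L1 (i+1)")
    case False then show ?thesis using less.prems by (intro exI[of _ L1] conjI) auto
  next
    case True
    then obtain i where i: "1 \<le> i" "i < n" "\<not> used L1 i" "\<not> used L1 (i+1)" by (elim exE conjE)
    define L1' where "L1' = insert (i,i+1) L1"
    have lay: "is_layer n L1'" unfolding L1'_def
      by (rule layer_insert[OF less.prems(1)]) (use i in auto)
    have adj: "\<forall>(a,b)\<in>L1'. b = a+1" using less.prems(2) unfolding L1'_def by auto
    have sub: "{k\<in>{1..n}. \<not> used L1' k} \<subset> {k\<in>{1..n}. \<not> used L1 k}"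
    proof
      show "{k\<in>{1..n}. \<not> used L1' k} \<subseteq> {k\<in>{1..n}. \<not> used L1 k}"
        unfolding L1'_def used_def by auto
      have "used L1' i" unfolding L1'_def by (rule usedI1[OF insertI1])
      then have "i \<notin> {k\<in>{1..n}. \<not> used L1' k}" by simp
      moreover have "i \<in> {k\<in>{1..n}. \<not> used L1 k}" using i by simp
      ultimately show "{k\<in>{1..n}. \<not> used L1' k} \<noteq> {k\<in>{1..n}. \<not> used L1 k}"
        by metis
    qed
    have "card {k\<in>{1..n}. \<not> used L1' k} < card {k\<in>{1..n}. \<not> used L1 k}"
      by (rule psubset_card_mono[OF _ sub]) simp
    then have "\<exists>L2. L1' \<subseteq> L2 \<and> is_layer n L2 \<and> (\<forall>(i,j)\<in>L2. j = i+1) \<and>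
       \<not>(\<exists>i. 1 \<le> i \<and> i < n \<and> \<not> used L2 i \<and> \<not> used L2 (i+1))"
      by (rule less.IH[OF _ lay adj])
    then obtain L2 where L2: "L1' \<subseteq> L2" "is_layer n L2" "\<forall>(i,j)\<in>L2. j = i+1"
       "\<not>(\<exists>i. 1 \<le> i \<and> i < n \<and> \<not> used L2 i \<and> \<not> used L2 (i+1))"
      by (elim exE conjE)
    have "L1 \<subseteq> L2" using L2(1) unfolding L1'_def by auto
    then show ?thesis using L2(2-4) by (intro exI[of _ L2] conjI)
  qed
qed

theorem lemma6:
  fixes n d :: nat and C :: network
  assumes "sorting_network n C" and "length C = d"
  shows "\<exists>N. sorting_network n N \<and> length N = d \<and>
           (d \<ge> 1 \<longrightarrow>
              (\<forall>(i,j)\<in>last N. j = i + 1) \<and>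
              \<not> (\<exists>i. 1 \<le> i \<and> i < n \<and> \<not> used (last N) i \<and> \<not> used (last N) (i+1)))"
proof (cases "d = 0")
  case True
  then show ?thesis using assms by (intro exI[of _ C]) simp
next
  case False
  then have Cne: "C \<noteq> []" using assms(2) by auto
  define P where "P = butlast C"
  define L where "L = last C"
  have C: "C = P @ [L]" using Cne unfolding P_def L_def by simp
  have netP: "is_network n P" and layL: "is_layer n L"
    using assms(1) C unfolding sorting_network_def is_network_def by auto
  have runC: "run C x = apply_layer L (run P x)" for x
    using C unfolding run_def by simp
  have sn: "\<forall>x. sorted_on n (apply_layer L (run P x))"
    using assms(1) runC unfolding sorting_network_def by simp
  define L1 where "L1 = {c\<in>L. snd c = fst c + 1}"
  have "L1 \<subseteq> L" unfolding L1_def by auto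
  then have lay1: "is_layer n L1" using layL unfolding is_layer_def by (meson subsetD)
  have adj1: "\<forall>(i,j)\<in>L1. j = i+1" unfolding L1_def by auto
  obtain L2 where L2: "L1 \<subseteq> L2" "is_layer n L2" "\<forall>(i,j)\<in>L2. j = i+1"
       "\<not>(\<exists>i. 1 \<le> i \<and> i < n \<and> \<not> used L2 i \<and> \<not> used L2 (i+1))"
    using extend[OF lay1 adj1] by (elim exE conjE)
  define N where "N = P @ [L2]"
  have runN: "run N x = apply_layer L2 (run P x)" for x
    unfolding N_def run_def by simp
  have srtN: "sorted_on n (run N x)" for x
    unfolding runN
  proof (rule final_layer[OF layL L2(2) sn[rule_format]])
    fix i j assume ij: "(i,j) \<in> L" "j \<noteq> i + 1"
    have "i < j" using layer_bounds[OF layL ij(1)] by simp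
    then have "i + 1 < j" using ij(2) by simp
    then show "run P x i \<longrightarrow> run P x j" using red[OF netP layL sn ij(1)] by simp
  next
    fix i assume "(i, i+1) \<in> L"
    then show "(i, i+1) \<in> L2" using L2(1) unfolding L1_def by auto
  next
    fix i j assume "(i,j) \<in> L2"
    then show "j = i + 1" using L2(3) by auto
  qed
  have "is_network n N" using netP L2(2) unfolding N_def is_network_def by auto
  then have "sorting_network n N" using srtN unfolding sorting_network_def by simp
  moreover have "length N = d" using assms(2) C unfolding N_def by simp
  moreover have "last N = L2" unfolding N_def by simp
  ultimately show ?thesis using L2(3,4) by (intro exI[of _ N]) simp
qed

end
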